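(* Let $s\ge 2$ and consider anisotropic bond percolation on $\mathbb{Z}\times\mathbb{Z}^s$ with parameters $(p,q)$. There exist $\alpha>0$ and $p_0<1$ with the following property. If $p\in(p_0,1)$ and $$q>\alpha\,\frac{1-p}{1+p},$$ then $\mathbb{P}_{p,q}$-almost surely there is an infinite open cluster in $\mathbb{Z}^{1+s}$; in particular $\theta(p,q)>0$.
   Context: $\mathbb{Z}^{1+s}=\mathbb{Z}\times\mathbb{Z}^s$ is the nearest-neighbour graph on $\mathbb{Z}^{1+s}$. An edge is a $\mathbb{Z}$-edge if its two endpoints differ only in their first ($\mathbb{Z}$) coordinate, and a $\mathbb{Z}^s$-edge if they differ only in their $\mathbb{Z}^s$ component. Under $\mathbb{P}_{p,q}$ each $\mathbb{Z}$-edge is open with probability $p$ and each $\mathbb{Z}^s$-edge is open with probability $q$, independently of all other edges. $\theta(p,q)$ is the $\mathbb{P}_{p,q}$-probability that the open cluster of the origin is infinite. *)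

theory Defs
  imports "HOL-Probability.Probability"
begin

text \<open>Vertices of Z x Z^s, where Z^s is modelled as functions from a finite
type 'n (with CARD('n) = s) to int.\<close>
type_synonym 'n vertex = "int \<times> ('n \<Rightarrow> int)"

text \<open>Directions: None is the Z-direction, Some i is the i-th Z^s direction.
An edge (x, d) joins x and x + e_d; every nearest-neighbour edge arises exactly once.\<close>
type_synonym 'n edge = "'n vertex \<times> 'n option"

fun step :: "'n option \<Rightarrow> 'n vertex \<Rightarrow> 'n vertex" where
  "step None (z, v) = (z + 1, v)"
| "step (Some i) (z, v) = (z, v(i := v i + 1))"

definition open_adj :: "('n edge \<Rightarrow> bool) \<Rightarrow> 'n vertex \<Rightarrow> 'n vertex \<Rightarrow> bool" where
  "open_adj \<omega> x y \<longleftrightarrow>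
     (\<exists>d. y = step d x \<and> \<omega> (x, d)) \<or> (\<exists>d. x = step d y \<and> \<omega> (y, d))"

definition cluster :: "('n edge \<Rightarrow> bool) \<Rightarrow> 'n vertex \<Rightarrow> 'n vertex set" where
  "cluster \<omega> x = {y. (open_adj \<omega>)\<^sup>*\<^sup>* x y}"

definition perc :: "real \<Rightarrow> real \<Rightarrow> ('n edge \<Rightarrow> bool) measure" where
  "perc p q = PiM UNIV (\<lambda>e. measure_pmf (bernoulli_pmf (if snd e = None then p else q)))"

definition origin :: "'n vertex" where
  "origin = (0, \<lambda>_. 0)"

definition theta :: "'n itself \<Rightarrow> real \<Rightarrow> real \<Rightarrow> real" where
  "theta _ p q = measure (perc p q :: ('n edge \<Rightarrow> bool) measure)
                   {\<omega> \<in> space (perc p q). infinite (cluster \<omega> (origin :: 'n vertex))}"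

end

theory Submission
  imports Defs
begin

definition emb :: "int \<Rightarrow> int \<Rightarrow> 'n vertex" where
  "emb z y = (z, (\<lambda>_. 0)(undefined := y))"

lemma step_None_emb[simp]: "step None (emb z y) = emb (z+1) y"
  by (simp add: emb_def)

lemma step_Some_emb[simp]: "step (Some undefined) (emb z y) = emb z (y+1)"
  by (simp add: emb_def)

lemma emb_inj[simp]: "(emb z y = emb z' y') \<longleftrightarrow> z = z' \<and> y = y'"
  by (auto simp: emb_def fun_eq_iff dest: spec[of _ undefined])

abbreviation R :: "('n edge \<Rightarrow> bool) \<Rightarrow> 'n vertex \<Rightarrow> 'n vertex \<Rightarrow> bool" where
  "R \<omega> \<equiv> (open_adj \<omega>)\<^sup>*\<^sup>*"

lemma open_adj_sym: "open_adj \<omega> x y = open_adj \<omega> y x"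
  by (auto simp: open_adj_def)

lemma R_sym: "R \<omega> x y \<Longrightarrow> R \<omega> y x"
proof (induction rule: rtranclp_induct)
  case base then show ?case by simp
next
  case (step y z) then show ?case
    by (meson converse_rtranclp_into_rtranclp open_adj_sym)
qed

lemma R_edge: "\<omega> (x, d) \<Longrightarrow> R \<omega> x (step d x)"
  by (rule r_into_rtranclp) (auto simp: open_adj_def)

definition rep :: "nat \<Rightarrow> int \<times> int \<Rightarrow> 'n vertex" where
  "rep l x = emb (fst x * int l) (snd x)"

definition osite :: "nat \<Rightarrow> ('n edge \<Rightarrow> bool) \<Rightarrow> int \<times> int \<Rightarrow> bool" where
  "osite l \<omega> x \<longleftrightarrow> (\<forall>t<l. \<omega> (emb (fst x * int l + int t) (snd x), None)) \<and>
       (\<exists>t<l. \<omega> (emb (fst x * int l + int t) (snd x), Some undefined))"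

lemma seg_conn:
  assumes "\<forall>t<l. \<omega> (emb (a * int l + int t) b, None)"
  shows "t \<le> l \<Longrightarrow> R \<omega> (emb (a * int l) b) (emb (a * int l + int t) b)"
proof (induction t)
  case 0 then show ?case by simp
next
  case (Suc t)
  then have "R \<omega> (emb (a * int l) b) (emb (a * int l + int t) b)" by simp
  moreover have "R \<omega> (emb (a * int l + int t) b) (emb (a * int l + int (Suc t)) b)"
    using R_edge[of \<omega> "emb (a * int l + int t) b" None] assms Suc.prems
    by (simp add: add.assoc add.commute)
  ultimately show ?case by (rule rtranclp_trans)
qed

definition conn :: "nat \<Rightarrow> ('n edge \<Rightarrow> bool) \<Rightarrow> int \<times> int \<Rightarrow> int \<times> int \<Rightarrow> bool" where
  "conn l \<omega> x y = R \<omega> (rep l x) (rep l y)"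

lemma conn_sym: "conn l \<omega> x y \<Longrightarrow> conn l \<omega> y x"
  by (simp add: conn_def R_sym)

lemma conn_trans: "conn l \<omega> x y \<Longrightarrow> conn l \<omega> y z \<Longrightarrow> conn l \<omega> x z"
  unfolding conn_def by (rule rtranclp_trans)

lemma conn_refl: "conn l \<omega> x x"
  by (simp add: conn_def)

lemma conn_right:
  assumes "osite l \<omega> (a, b)"
  shows "conn l \<omega> (a, b) (a + 1, b)"
proof -
  have "R \<omega> (emb (a * int l) b) (emb (a * int l + int l) b)"
    using seg_conn[of l \<omega> a b l] assms by (simp add: osite_def)
  then show ?thesis by (simp add: conn_def rep_def algebra_simps)
qed

lemma conn_up:
  assumes "osite l \<omega> (a, b)" "osite l \<omega> (a, b+1)"
  shows "conn l \<omega> (a, b) (a, b + 1)"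
proof -
  obtain t where t: "t < l" "\<omega> (emb (a * int l + int t) b, Some undefined)"
    using assms(1) by (auto simp: osite_def)
  have 1: "R \<omega> (emb (a * int l) b) (emb (a * int l + int t) b)"
    using seg_conn[of l \<omega> a b t] assms t by (simp add: osite_def)
  have 2: "R \<omega> (emb (a * int l + int t) b) (emb (a * int l + int t) (b+1))"
    using R_edge[of \<omega> "emb (a * int l + int t) b" "Some undefined"] t(2) by simp
  have 3: "R \<omega> (emb (a * int l) (b+1)) (emb (a * int l + int t) (b+1))"
    using seg_conn[of l \<omega> a "b+1" t] assms t by (simp add: osite_def)
  have "R \<omega> (emb (a * int l) b) (emb (a * int l) (b+1))"
    using rtranclp_trans[OF rtranclp_trans[OF 1 2] R_sym[OF 3]] .
  then show ?thesis by (simp add: conn_def rep_def)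
qed

definition Grid :: "(int \<times> int) set" where "Grid = {0..12} \<times> {0..12}"
definition Inner :: "(int \<times> int) set" where "Inner = {2..10} \<times> {2..10}"
definition far :: "int \<times> int \<Rightarrow> int \<times> int \<Rightarrow> bool" where
  "far P Q \<longleftrightarrow> 3 < \<bar>fst P - fst Q\<bar> \<or> 3 < \<bar>snd P - snd Q\<bar>"

definition lk :: "(int \<times> int) set \<Rightarrow> int \<times> int \<Rightarrow> int \<times> int \<Rightarrow> bool" where
  "lk B P Q \<longleftrightarrow> P \<in> Grid \<and> P \<notin> B \<and> Q \<in> Grid \<and> Q \<notin> B \<and>
     ((fst P = fst Q \<and> \<bar>snd P - snd Q\<bar> \<le> 2) \<or> (snd P = snd Q \<and> \<bar>fst P - fst Q\<bar> \<le> 2))"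

lemma symp_rtranclp_sym: assumes "symp r" "r\<^sup>*\<^sup>* x y" shows "r\<^sup>*\<^sup>* y x"
  using assms(2)
proof (induction rule: rtranclp_induct)
  case base then show ?case by simp
next
  case (step y z) then show ?case
    by (meson converse_rtranclp_into_rtranclp sympD assms(1))
qed

lemma lk_symp: "symp (lk B)"
  by (auto simp: symp_def lk_def)

lemma line_h:
  assumes "\<forall>t\<in>{a..a+int n}. (t, y) \<in> Grid \<and> (t, y) \<notin> B"
  shows "(lk B)\<^sup>*\<^sup>* (a, y) (a + int n, y)"
  using assms
proof (induction n)
  case 0 then show ?case by simp
next
  case (Suc n)
  then have "(lk B)\<^sup>*\<^sup>* (a, y) (a + int n, y)" by simp
  moreover have "lk B (a + int n, y) (a + int (Suc n), y)"
    using Suc.prems by (auto simp: lk_def)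
  ultimately show ?case by (rule rtranclp.rtrancl_into_rtrancl)
qed

lemma line_v:
  assumes "\<forall>t\<in>{a..a+int n}. (x, t) \<in> Grid \<and> (x, t) \<notin> B"
  shows "(lk B)\<^sup>*\<^sup>* (x, a) (x, a + int n)"
  using assms
proof (induction n)
  case 0 then show ?case by simp
next
  case (Suc n)
  then have "(lk B)\<^sup>*\<^sup>* (x, a) (x, a + int n)" by simp
  moreover have "lk B (x, a + int n) (x, a + int (Suc n))"
    using Suc.prems by (auto simp: lk_def)
  ultimately show ?case by (rule rtranclp.rtrancl_into_rtrancl)
qed

lemma line_h':
  assumes "\<forall>t\<in>{min a b..max a b}. (t, y) \<in> Grid \<and> (t, y) \<notin> B"
  shows "(lk B)\<^sup>*\<^sup>* (a, y) (b, y)"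
proof (cases "a \<le> b")
  case True
  then show ?thesis using line_h[of a "nat (b - a)" y B] assms by auto
next
  case False
  then have "(lk B)\<^sup>*\<^sup>* (b, y) (a, y)" using line_h[of b "nat (a - b)" y B] assms by auto
  then show ?thesis by (rule symp_rtranclp_sym[OF lk_symp])
qed

lemma line_v':
  assumes "\<forall>t\<in>{min a b..max a b}. (x, t) \<in> Grid \<and> (x, t) \<notin> B"
  shows "(lk B)\<^sup>*\<^sup>* (x, a) (x, b)"
proof (cases "a \<le> b")
  case True
  then show ?thesis using line_v[of a "nat (b - a)" x B] assms by auto
next
  case False
  then have "(lk B)\<^sup>*\<^sup>* (x, b) (x, a)" using line_v[of b "nat (a - b)" x B] assms by auto
  then show ?thesis by (rule symp_rtranclp_sym[OF lk_symp])
qed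

lemma grid_hub:
  assumes cl: "\<forall>P\<in>B. \<forall>Q\<in>B. \<not> far P Q"
  obtains r where "r \<in> {0, 12}" "\<forall>P. P \<in> Inner \<longrightarrow> P \<notin> B \<longrightarrow> (lk B)\<^sup>*\<^sup>* P (0, r)"
proof -
  obtain r where r: "r \<in> {0, 12}" "\<forall>Q\<in>B. snd Q \<noteq> r"
  proof (cases "\<exists>Q\<in>B. snd Q = 0")
    case True
    then obtain Q0 where Q0: "Q0 \<in> B" "snd Q0 = 0" by auto
    have "\<forall>Q\<in>B. snd Q \<noteq> 12"
    proof
      fix Q assume "Q \<in> B" then have "\<not> far Q0 Q" using cl Q0 by blast
      then show "snd Q \<noteq> 12" using Q0 by (auto simp: far_def)
    qed
    then show ?thesis using that by auto
  next
    case False then show ?thesis using that by auto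
  qed
  have row: "\<forall>t\<in>{0..12}. (t, r) \<in> Grid \<and> (t, r) \<notin> B"
    using r by (auto simp: Grid_def)
  {
    fix P assume P: "P \<in> Inner" "P \<notin> B"
    obtain i j where ij: "P = (i, j)" by (cases P)
    have ij': "2 \<le> i" "i \<le> 10" "2 \<le> j" "j \<le> 10" using P ij by (auto simp: Inner_def)
    obtain c where c: "c \<in> {i - 2, i + 2}" "\<forall>Q\<in>B. fst Q \<noteq> c"
    proof (cases "\<exists>Q\<in>B. fst Q = i - 2")
      case True
      then obtain Q0 where Q0: "Q0 \<in> B" "fst Q0 = i - 2" by auto
      have "\<forall>Q\<in>B. fst Q \<noteq> i + 2"
      proof
        fix Q assume "Q \<in> B" then have "\<not> far Q0 Q" using cl Q0 by blast
        then show "fst Q \<noteq> i + 2" using Q0 by (auto simp: far_def)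
      qed
      then show ?thesis using that by auto
    next
      case False then show ?thesis using that by auto
    qed
    have c': "0 \<le> c" "c \<le> 12" using c ij' by auto
    have col: "\<forall>t\<in>{0..12}. (c, t) \<in> Grid \<and> (c, t) \<notin> B"
      using c c' by (auto simp: Grid_def)
    have 1: "lk B (i, j) (c, j)"
      using P ij ij' c c' col by (auto simp: lk_def Grid_def Inner_def)
    have 2: "(lk B)\<^sup>*\<^sup>* (c, j) (c, r)"
      by (rule line_v') (use col ij' r in auto)
    have 3: "(lk B)\<^sup>*\<^sup>* (c, r) (0, r)"
      by (rule line_h') (use row c' in auto)
    have "(lk B)\<^sup>*\<^sup>* P (0, r)"
      unfolding ij using 1 2 3 by (meson converse_rtranclp_into_rtranclp rtranclp_trans)
  }
  then show ?thesis using that r by blast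
qed

lemma grid_conn:
  assumes cl: "\<forall>P\<in>B. \<forall>Q\<in>B. \<not> far P Q"
    and "P \<in> Inner" "P \<notin> B" "Q \<in> Inner" "Q \<notin> B"
  shows "(lk B)\<^sup>*\<^sup>* P Q"
proof -
  obtain r where "\<forall>P. P \<in> Inner \<longrightarrow> P \<notin> B \<longrightarrow> (lk B)\<^sup>*\<^sup>* P (0, r)"
    using grid_hub[OF cl] by blast
  then show ?thesis using assms
    by (meson lk_symp rtranclp_trans symp_rtranclp_sym)
qed

definition u :: "nat \<Rightarrow> int" where "u k = 4 ^ (k + 1)"

lemma u_Suc: "u (Suc k) = 4 * u k" by (simp add: u_def)
lemma u_pos: "4 \<le> u k"
proof -
  have "(4::int) ^ 1 \<le> 4 ^ (k + 1)" by (rule power_increasing) auto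
  then show ?thesis by (simp add: u_def)
qed

definition blk :: "nat \<Rightarrow> int \<times> int \<Rightarrow> (int \<times> int) set" where
  "blk k c = {x. fst c \<le> fst x \<and> fst x < fst c + 4 * u k \<and> snd c \<le> snd x \<and> snd x < snd c + 4 * u k}"

definition mc :: "nat \<Rightarrow> int \<times> int \<Rightarrow> int \<times> int \<Rightarrow> int \<times> int" where
  "mc k c P = (fst c + fst P * u k, snd c + snd P * u k)"

fun bad :: "nat \<Rightarrow> nat \<Rightarrow> int \<times> int \<Rightarrow> ('n edge \<Rightarrow> bool) \<Rightarrow> bool" where
  "bad l 0 c \<omega> = (\<exists>x\<in>blk 0 c. \<not> osite l \<omega> x)"
| "bad l (Suc k) c \<omega> = (\<exists>P\<in>Grid. \<exists>Q\<in>Grid. far P Q \<and> bad l k (mc k c P) \<omega> \<and> bad l k (mc k c Q) \<omega>)"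

fun core :: "nat \<Rightarrow> nat \<Rightarrow> int \<times> int \<Rightarrow> ('n edge \<Rightarrow> bool) \<Rightarrow> (int \<times> int) set" where
  "core l 0 c \<omega> = blk 0 c"
| "core l (Suc k) c \<omega> = (\<Union>P\<in>{P\<in>Inner. \<not> bad l k (mc k c P) \<omega>}. core l k (mc k c P) \<omega>)"

lemma mult_bounds:
  fixes i v :: int assumes "0 \<le> i" "i \<le> n" "0 \<le> v"
  shows "0 \<le> i * v" "i * v \<le> n * v"
  using assms by (auto intro: mult_right_mono)

lemma mc_sub:
  assumes "P \<in> Grid" shows "blk k (mc k c P) \<subseteq> blk (Suc k) c"
proof
  fix x assume x: "x \<in> blk k (mc k c P)"
  have "0 \<le> fst P * u k" "fst P * u k \<le> 12 * u k" "0 \<le> snd P * u k" "snd P * u k \<le> 12 * u k"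
    using assms u_pos[of k] by (auto simp: Grid_def intro!: mult_bounds)
  moreover have "fst c + fst P * u k \<le> fst x" "fst x < fst c + fst P * u k + 4 * u k"
    "snd c + snd P * u k \<le> snd x" "snd x < snd c + snd P * u k + 4 * u k"
    using x by (auto simp: blk_def mc_def)
  ultimately show "x \<in> blk (Suc k) c" unfolding blk_def u_Suc mem_Collect_eq
    by (intro conjI; linarith)
qed

lemma far_mult: fixes i j v :: int assumes "3 < \<bar>i - j\<bar>" "0 < v"
  shows "4 * v \<le> \<bar>i * v - j * v\<bar>"
proof -
  have "4 * v \<le> \<bar>i - j\<bar> * v" using assms by (intro mult_right_mono) auto
  also have "\<dots> = \<bar>i * v - j * v\<bar>" using assms by (simp add: abs_mult left_diff_distrib[symmetric])
  finally show ?thesis .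
qed

lemma far_disj:
  assumes "far P Q" shows "blk k (mc k c P) \<inter> blk k (mc k c Q) = {}"
proof -
  have up: "0 < u k" using u_pos[of k] by simp
  show ?thesis
  proof (cases "3 < \<bar>fst P - fst Q\<bar>")
    case True
    then have "4 * u k \<le> \<bar>fst P * u k - fst Q * u k\<bar>" using far_mult up by blast
    then show ?thesis by (auto simp: blk_def mc_def)
  next
    case False
    then have "3 < \<bar>snd P - snd Q\<bar>" using assms by (auto simp: far_def)
    then have "4 * u k \<le> \<bar>snd P * u k - snd Q * u k\<bar>" using far_mult up by blast
    then show ?thesis by (auto simp: blk_def mc_def)
  qed
qed

lemma Inner_Grid: "Inner \<subseteq> Grid" by (auto simp: Inner_def Grid_def)

lemma core_sub: "core l k c \<omega> \<subseteq> blk k c"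
proof (induction k arbitrary: c)
  case 0 then show ?case by simp
next
  case (Suc k)
  show ?case
  proof
    fix x assume "x \<in> core l (Suc k) c \<omega>"
    then obtain P where "P \<in> Inner" "x \<in> core l k (mc k c P) \<omega>" by auto
    then show "x \<in> blk (Suc k) c" using Suc.IH mc_sub[of P k c] Inner_Grid by blast
  qed
qed

lemma finite_blk: "finite (blk k c)"
proof -
  have "blk k c \<subseteq> {fst c..<fst c + 4 * u k} \<times> {snd c..<snd c + 4 * u k}"
    by (auto simp: blk_def)
  then show ?thesis by (rule finite_subset) auto
qed

lemma finite_core: "finite (core l k c \<omega>)"
  using finite_subset[OF core_sub finite_blk] .

lemma c_in_blk: "c \<in> blk k c"
  using u_pos[of k] by (auto simp: blk_def)

lemma two_good:
  assumes "\<not> bad l (Suc k) c \<omega>"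
  obtains X Y where "X \<in> Inner" "Y \<in> Inner" "far X Y"
    "\<not> bad l k (mc k c X) \<omega>" "\<not> bad l k (mc k c Y) \<omega>"
proof -
  have G: "(2,2) \<in> Grid" "(6,2) \<in> Grid" "(10,2) \<in> Grid" by (auto simp: Grid_def)
  have I: "(2,2) \<in> Inner" "(6,2) \<in> Inner" "(10,2) \<in> Inner" by (auto simp: Inner_def)
  have F: "far (2,2) (6,2)" "far (2,2) (10,2)" "far (6,2) (10,2)" by (auto simp: far_def)
  have nb: "\<And>P Q. P \<in> Grid \<Longrightarrow> Q \<in> Grid \<Longrightarrow> far P Q \<Longrightarrow> bad l k (mc k c P) \<omega> \<Longrightarrow> bad l k (mc k c Q) \<omega> \<Longrightarrow> False"
    using assms unfolding bad.simps by blast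
  show ?thesis
  proof (cases "bad l k (mc k c (2,2)) \<omega>")
    case True
    then have "\<not> bad l k (mc k c (6,2)) \<omega>" "\<not> bad l k (mc k c (10,2)) \<omega>"
      using nb[OF G(1) G(2) F(1)] nb[OF G(1) G(3) F(2)] by blast+
    then show ?thesis using that I F by blast
  next
    case False
    show ?thesis
    proof (cases "bad l k (mc k c (6,2)) \<omega>")
      case True
      then have "\<not> bad l k (mc k c (10,2)) \<omega>"
        using nb[OF G(2) G(3) F(3)] by blast
      then show ?thesis using that I F False by blast
    next
      case False2: False
      then show ?thesis using that I F False by blast
    qed
  qed
qed

lemma core_card: "\<not> bad l k c \<omega> \<Longrightarrow> 2 ^ k \<le> card (core l k c \<omega>)"
proof (induction k arbitrary: c)
  case 0
  have "card (blk 0 c) \<noteq> 0" using c_in_blk[of c 0] finite_blk[of 0 c] by auto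
  then show ?case by simp
next
  case (Suc k)
  obtain X Y where XY: "X \<in> Inner" "Y \<in> Inner" "far X Y"
    "\<not> bad l k (mc k c X) \<omega>" "\<not> bad l k (mc k c Y) \<omega>"
    using two_good[OF Suc.prems] by blast
  have d: "core l k (mc k c X) \<omega> \<inter> core l k (mc k c Y) \<omega> = {}"
    using far_disj[OF XY(3), of k c] core_sub by blast
  have sub: "core l k (mc k c X) \<omega> \<union> core l k (mc k c Y) \<omega> \<subseteq> core l (Suc k) c \<omega>"
    using XY by auto
  have "2 ^ Suc k \<le> card (core l k (mc k c X) \<omega>) + card (core l k (mc k c Y) \<omega>)"
    using Suc.IH[OF XY(4)] Suc.IH[OF XY(5)] by simp
  also have "\<dots> = card (core l k (mc k c X) \<omega> \<union> core l k (mc k c Y) \<omega>)"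
    using d by (simp add: card_Un_disjoint finite_core)
  also have "\<dots> \<le> card (core l (Suc k) c \<omega>)"
    by (rule card_mono[OF finite_core sub])
  finally show ?case .
qed

lemma core_ne: "\<not> bad l k c \<omega> \<Longrightarrow> core l k c \<omega> \<noteq> {}"
  using core_card[of l k c \<omega>] by (metis card.empty le_zero_eq power_not_zero zero_neq_numeral)

lemma link_h:
  assumes "\<not> bad l k c \<omega>" "\<not> bad l k c' \<omega>" "\<bar>d\<bar> \<le> 2" "c' = (fst c + d * u k, snd c)"
  shows "core l k c \<omega> \<inter> core l k c' \<omega> \<noteq> {}"
proof (cases k)
  case 0
  have u0: "u 0 = 4" by (simp add: u_def)
  show ?thesis
  proof (cases "0 \<le> d")
    case True
    then have "c' \<in> blk 0 c" using assms(3,4) u0 0 by (auto simp: blk_def)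
    then show ?thesis using c_in_blk[of c' 0] 0 by auto
  next
    case False
    then have "c \<in> blk 0 c'" using assms(3,4) u0 0 by (auto simp: blk_def)
    then show ?thesis using c_in_blk[of c 0] 0 by auto
  qed
next
  case (Suc m)
  define i where "i = (if 0 \<le> d then 2 + 4 * d else 2)"
  have "d = -2 \<or> d = -1 \<or> d = 0 \<or> d = 1 \<or> d = 2" using assms(3) by arith
  then have i: "i \<in> {2, 6, 10}" "i - 4 * d \<in> {2, 6, 10}" by (auto simp: i_def)
  have G: "(i, 2) \<in> Grid" "(i, 6) \<in> Grid" using i by (auto simp: Grid_def)
  have F: "far (i, 2) (i, 6)" by (auto simp: far_def)
  obtain j where j: "j \<in> {2, 6}" "\<not> bad l m (mc m c (i, j)) \<omega>"
    using assms(1)[unfolded Suc bad.simps] G F by blast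
  have E: "(i, j) \<in> Inner" "(i - 4 * d, j) \<in> Inner" using i j by (auto simp: Inner_def)
  have eq: "mc m c' (i - 4 * d, j) = mc m c (i, j)"
    using assms(4) Suc by (simp add: mc_def u_Suc algebra_simps)
  have "core l m (mc m c (i, j)) \<omega> \<subseteq> core l k c \<omega>" using E j Suc by auto
  moreover have "core l m (mc m c (i, j)) \<omega> \<subseteq> core l k c' \<omega>" using E j Suc eq by force
  moreover have "core l m (mc m c (i, j)) \<omega> \<noteq> {}" using core_ne j by blast
  ultimately show ?thesis by blast
qed

lemma link_v:
  assumes "\<not> bad l k c \<omega>" "\<not> bad l k c' \<omega>" "\<bar>d\<bar> \<le> 2" "c' = (fst c, snd c + d * u k)"
  shows "core l k c \<omega> \<inter> core l k c' \<omega> \<noteq> {}"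
proof (cases k)
  case 0
  have u0: "u 0 = 4" by (simp add: u_def)
  show ?thesis
  proof (cases "0 \<le> d")
    case True
    then have "c' \<in> blk 0 c" using assms(3,4) u0 0 by (auto simp: blk_def)
    then show ?thesis using c_in_blk[of c' 0] 0 by auto
  next
    case False
    then have "c \<in> blk 0 c'" using assms(3,4) u0 0 by (auto simp: blk_def)
    then show ?thesis using c_in_blk[of c 0] 0 by auto
  qed
next
  case (Suc m)
  define i where "i = (if 0 \<le> d then 2 + 4 * d else 2)"
  have "d = -2 \<or> d = -1 \<or> d = 0 \<or> d = 1 \<or> d = 2" using assms(3) by arith
  then have i: "i \<in> {2, 6, 10}" "i - 4 * d \<in> {2, 6, 10}" by (auto simp: i_def)
  have G: "(2, i) \<in> Grid" "(6, i) \<in> Grid" using i by (auto simp: Grid_def)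
  have F: "far (2, i) (6, i)" by (auto simp: far_def)
  obtain j where j: "j \<in> {2, 6}" "\<not> bad l m (mc m c (j, i)) \<omega>"
    using assms(1)[unfolded Suc bad.simps] G F by blast
  have E: "(j, i) \<in> Inner" "(j, i - 4 * d) \<in> Inner" using i j by (auto simp: Inner_def)
  have eq: "mc m c' (j, i - 4 * d) = mc m c (j, i)"
    using assms(4) Suc by (simp add: mc_def u_Suc algebra_simps)
  have "core l m (mc m c (j, i)) \<omega> \<subseteq> core l k c \<omega>" using E j Suc by auto
  moreover have "core l m (mc m c (j, i)) \<omega> \<subseteq> core l k c' \<omega>" using E j Suc eq by force
  moreover have "core l m (mc m c (j, i)) \<omega> \<noteq> {}" using core_ne j by blast
  ultimately show ?thesis by blast
qed

lemma rowc:
  assumes "\<forall>t\<in>{a..a+int n}. osite l \<omega> (t, b)"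
  shows "conn l \<omega> (a, b) (a + int n, b)"
  using assms
proof (induction n)
  case 0 then show ?case by (simp add: conn_refl)
next
  case (Suc n)
  then have "conn l \<omega> (a, b) (a + int n, b)" by simp
  moreover have "conn l \<omega> (a + int n, b) (a + int (Suc n), b)"
    using conn_right[of l \<omega> "a + int n" b] Suc.prems by (auto simp: algebra_simps)
  ultimately show ?case by (rule conn_trans)
qed

lemma colc:
  assumes "\<forall>t\<in>{b..b+int n}. osite l \<omega> (a, t)"
  shows "conn l \<omega> (a, b) (a, b + int n)"
  using assms
proof (induction n)
  case 0 then show ?case by (simp add: conn_refl)
next
  case (Suc n)
  then have "conn l \<omega> (a, b) (a, b + int n)" by simp
  moreover have "conn l \<omega> (a, b + int n) (a, b + int (Suc n))"
    using conn_up[of l \<omega> a "b + int n"] Suc.prems by (auto simp: algebra_simps)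
  ultimately show ?case by (rule conn_trans)
qed

lemma rowc':
  assumes "\<forall>t\<in>{min a a'..max a a'}. osite l \<omega> (t, b)"
  shows "conn l \<omega> (a, b) (a', b)"
proof (cases "a \<le> a'")
  case True then show ?thesis using rowc[of a "nat (a' - a)" l \<omega> b] assms by auto
next
  case False then show ?thesis using rowc[of a' "nat (a - a')" l \<omega> b] assms conn_sym by fastforce
qed

lemma colc':
  assumes "\<forall>t\<in>{min b b'..max b b'}. osite l \<omega> (a, t)"
  shows "conn l \<omega> (a, b) (a, b')"
proof (cases "b \<le> b'")
  case True then show ?thesis using colc[of b "nat (b' - b)" l \<omega> a] assms by auto
next
  case False then show ?thesis using colc[of b' "nat (b - b')" l \<omega> a] assms conn_sym by fastforce
qed

lemma core_conn: "\<not> bad l k c \<omega> \<Longrightarrow> x \<in> core l k c \<omega> \<Longrightarrow> y \<in> core l k c \<omega> \<Longrightarrow> conn l \<omega> x y"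
proof (induction k arbitrary: c x y)
  case 0
  then have op: "\<forall>z\<in>blk 0 c. osite l \<omega> z" by simp
  obtain a b where x: "x = (a, b)" by (cases x)
  obtain a' b' where y: "y = (a', b')" by (cases y)
  have "conn l \<omega> (a, b) (a', b)"
    by (rule rowc') (use op 0 x y in \<open>auto simp: blk_def min_def max_def split: if_splits\<close>)
  moreover have "conn l \<omega> (a', b) (a', b')"
    by (rule colc') (use op 0 x y in \<open>auto simp: blk_def min_def max_def split: if_splits\<close>)
  ultimately show ?case using x y conn_trans by blast
next
  case (Suc k)
  define B where "B = {P \<in> Grid. bad l k (mc k c P) \<omega>}"
  have cl: "\<forall>P\<in>B. \<forall>Q\<in>B. \<not> far P Q" using Suc.prems(1) by (auto simp: B_def)
  obtain X where X: "X \<in> Inner" "\<not> bad l k (mc k c X) \<omega>" "x \<in> core l k (mc k c X) \<omega>"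
    using Suc.prems(2) by auto
  obtain Y where Y: "Y \<in> Inner" "\<not> bad l k (mc k c Y) \<omega>" "y \<in> core l k (mc k c Y) \<omega>"
    using Suc.prems(3) by auto
  have XB: "X \<notin> B" "Y \<notin> B" using X Y by (auto simp: B_def)
  have path: "(lk B)\<^sup>*\<^sup>* X Y" using grid_conn[OF cl X(1) XB(1) Y(1) XB(2)] .
  have "\<forall>z\<in>core l k (mc k c Z) \<omega>. conn l \<omega> x z" if "(lk B)\<^sup>*\<^sup>* X Z" for Z
    using that
  proof (induction rule: rtranclp_induct)
    case base
    then show ?case using Suc.IH X by blast
  next
    case (step Z W)
    have gZ: "\<not> bad l k (mc k c Z) \<omega>" and gW: "\<not> bad l k (mc k c W) \<omega>"
      using step.hyps(2) by (auto simp: lk_def B_def)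
    have "core l k (mc k c Z) \<omega> \<inter> core l k (mc k c W) \<omega> \<noteq> {}"
    proof (cases "fst Z = fst W")
      case True
      then have "\<bar>snd W - snd Z\<bar> \<le> 2" using step.hyps(2) by (auto simp: lk_def)
      then show ?thesis using True gZ gW
        by (intro link_v[where d="snd W - snd Z"]) (auto simp: mc_def algebra_simps)
    next
      case False
      then have "snd Z = snd W" "\<bar>fst W - fst Z\<bar> \<le> 2" using step.hyps(2) by (auto simp: lk_def)
      then show ?thesis using gZ gW
        by (intro link_h[where d="fst W - fst Z"]) (auto simp: mc_def algebra_simps)
    qed
    then obtain w0 where w0: "w0 \<in> core l k (mc k c Z) \<omega>" "w0 \<in> core l k (mc k c W) \<omega>" by blast
    show ?case
    proof
      fix z assume z: "z \<in> core l k (mc k c W) \<omega>"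
      have "conn l \<omega> x w0" using step.IH w0 by blast
      moreover have "conn l \<omega> w0 z" using Suc.IH[OF gW w0(2) z] .
      ultimately show "conn l \<omega> x z" by (rule conn_trans)
    qed
  qed
  then show ?case using path Y by blast
qed

fun cen :: "nat \<Rightarrow> int" where
  "cen 0 = 0"
| "cen (Suc k) = cen k - 6 * u k"

definition C :: "nat \<Rightarrow> int \<times> int" where "C k = (cen k, cen k)"

lemma core_nest:
  assumes "\<not> bad l (Suc k) (C (Suc k)) \<omega>" "\<not> bad l k (C k) \<omega>"
  shows "core l k (C k) \<omega> \<subseteq> core l (Suc k) (C (Suc k)) \<omega>"
proof -
  have "mc k (C (Suc k)) (6, 6) = C k" by (simp add: mc_def C_def)
  moreover have "(6, 6) \<in> Inner" by (simp add: Inner_def)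
  ultimately show ?thesis using assms(2) by force
qed

lemma core_nest':
  assumes "\<forall>k\<ge>K. \<not> bad l k (C k) \<omega>" "K \<le> k"
  shows "core l K (C K) \<omega> \<subseteq> core l k (C k) \<omega>"
  using assms(2)
proof (induction k rule: dec_induct)
  case base then show ?case by simp
next
  case (step k)
  then show ?case using core_nest[of l k \<omega>] assms(1) by (meson le_SucI order_trans)
qed

lemma rep_inj: assumes "0 < l" shows "inj (rep l)"
proof (rule injI)
  fix x y assume "rep l x = rep l y"
  then have "fst x * int l = fst y * int l" "snd x = snd y" by (auto simp: rep_def)
  then show "x = y" using assms by (simp add: prod_eq_iff)
qed

lemma det_inf:
  fixes \<omega> :: "'n edge \<Rightarrow> bool"
  assumes "\<forall>k\<ge>K. \<not> bad l k (C k) \<omega>" "x \<in> core l K (C K) \<omega>" "0 < l"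
  shows "infinite (cluster \<omega> (rep l x))"
proof
  assume fin: "finite (cluster \<omega> (rep l x))"
  define N where "N = card (cluster \<omega> (rep l x))"
  define k where "k = max K N"
  have k: "K \<le> k" "N \<le> k" by (auto simp: k_def)
  have sub: "(rep l :: _ \<Rightarrow> 'n vertex) ` core l k (C k) \<omega> \<subseteq> cluster \<omega> (rep l x)"
  proof (rule image_subsetI)
    fix y assume y: "y \<in> core l k (C k) \<omega>"
    have "x \<in> core l k (C k) \<omega>" using core_nest'[OF assms(1) k(1)] assms(2) by blast
    then have "conn l \<omega> x y" using core_conn assms(1) k(1) y by blast
    then show "rep l y \<in> cluster \<omega> (rep l x)" by (simp add: conn_def cluster_def)
  qed
  have "2 ^ k \<le> card (core l k (C k) \<omega>)" using core_card assms(1) k(1) by blast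
  also have "\<dots> = card ((rep l :: _ \<Rightarrow> 'n vertex) ` core l k (C k) \<omega>)"
    by (rule card_image[symmetric], rule inj_on_subset[OF rep_inj[OF assms(3)] subset_UNIV])
  also have "\<dots> \<le> N" unfolding N_def by (rule card_mono[OF fin sub])
  finally have "2 ^ k \<le> k" using k(2) by linarith
  then show False using less_exp[of k] by linarith
qed

definition Mf :: "real \<Rightarrow> real \<Rightarrow> 'n edge \<Rightarrow> bool measure" where
  "Mf p q = (\<lambda>e. measure_pmf (bernoulli_pmf (if snd e = None then p else q)))"

lemma perc_Mf: "perc p q = PiM UNIV (Mf p q)"
  by (simp add: perc_def Mf_def)

lemma PS: "product_prob_space (Mf p q)"
  unfolding product_prob_space_def product_prob_space_axioms_def product_sigma_finite_def
  by (auto simp: Mf_def prob_space_measure_pmf prob_space_imp_sigma_finite)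

lemma space_perc: "space (perc p q) = UNIV"
  by (simp add: perc_Mf space_PiM Mf_def)

lemma space_Mf: "space (PiM J (Mf p q)) = PiE J (\<lambda>_. UNIV)"
  by (simp add: space_PiM Mf_def)

lemma sets_Mf[simp]: "sets (Mf p q e) = UNIV"
  by (simp add: Mf_def)

lemma fin_sets:
  assumes "finite J" "S \<subseteq> space (PiM J (Mf p q))"
  shows "S \<in> sets (PiM J (Mf p q))"
proof -
  have finS: "finite S"
    using assms by (intro finite_subset[OF assms(2)]) (simp add: space_Mf finite_PiE)
  have "S = (\<Union>x\<in>S. PiE J (\<lambda>j. {x j}))"
  proof -
    have "PiE J (\<lambda>j. {x j}) = {x}" if "x \<in> S" for x
      using that assms(2) by (auto simp: space_Mf PiE_iff extensional_def fun_eq_iff)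
    then show ?thesis by auto
  qed
  also have "\<dots> \<in> sets (PiM J (Mf p q))"
    using finS assms(1) by (intro sets.finite_UN sets_PiM_I_finite) auto
  finally show ?thesis .
qed

definition dep :: "'a set \<Rightarrow> (('a \<Rightarrow> bool) \<Rightarrow> bool) \<Rightarrow> bool" where
  "dep J f \<longleftrightarrow> (\<forall>\<omega>. f \<omega> = f (restrict \<omega> J))"

lemma ev_eq:
  assumes "dep J f"
  shows "{\<omega> \<in> space (perc p q). f \<omega>} = (\<lambda>\<omega>. restrict \<omega> J) -` {x \<in> space (PiM J (Mf p q)). f x} \<inter> space (perc p q)"
  using assms by (auto simp: dep_def space_perc space_Mf)

lemma ev_sets:
  assumes "finite J" "dep J f"
  shows "{\<omega> \<in> space (perc p q). f \<omega>} \<in> sets (perc p q)"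
proof -
  have "(\<lambda>\<omega>. restrict \<omega> J) \<in> measurable (perc p q) (PiM J (Mf p q))"
    unfolding perc_Mf by (rule measurable_restrict_subset) simp
  then show ?thesis unfolding ev_eq[OF assms(2)]
    by (rule measurable_sets) (rule fin_sets[OF assms(1)], auto)
qed

lemma indep_coords: "prob_space.indep_vars (perc p q) (Mf p q) (\<lambda>i \<omega>. \<omega> i) UNIV"
proof -
  interpret P: product_prob_space "Mf p q" UNIV by (rule PS)
  have rv: "(\<lambda>\<omega>. \<omega> i) \<in> measurable (PiM UNIV (Mf p q)) (Mf p q i)" for i
    using measurable_component_singleton[of i UNIV "Mf p q"] by simp
  have "P.indep_vars (Mf p q) (\<lambda>i \<omega>. \<omega> i) UNIV"
  proof (subst P.indep_vars_iff_distr_eq_PiM[OF _ rv])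
    show "UNIV \<noteq> {}" by simp
    have d: "(\<Pi>\<^sub>M i\<in>UNIV. distr (PiM UNIV (Mf p q)) (Mf p q i) (\<lambda>x. x i)) = PiM UNIV (Mf p q)"
      by (intro PiM_cong) (auto simp: P.PiM_component)
    show "distr (PiM UNIV (Mf p q)) (\<Pi>\<^sub>M i\<in>UNIV. Mf p q i) (\<lambda>x. \<lambda>i\<in>UNIV. x i) =
       (\<Pi>\<^sub>M i\<in>UNIV. distr (PiM UNIV (Mf p q)) (Mf p q i) (\<lambda>x. x i))"
      unfolding d by (simp add: restrict_UNIV)
  qed
  then show ?thesis by (simp add: perc_Mf)
qed

lemma indep_prod:
  assumes "finite J1" "finite J2" "J1 \<inter> J2 = {}" "dep J1 f1" "dep J2 f2"
  shows "measure (perc p q) {\<omega> \<in> space (perc p q). f1 \<omega> \<and> f2 \<omega>} =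
    measure (perc p q) {\<omega> \<in> space (perc p q). f1 \<omega>} * measure (perc p q) {\<omega> \<in> space (perc p q). f2 \<omega>}"
proof -
  interpret P: product_prob_space "Mf p q" UNIV by (rule PS)
  have iv: "P.indep_var (PiM J1 (Mf p q)) (\<lambda>\<omega>. restrict (\<lambda>i. \<omega> i) J1) (PiM J2 (Mf p q)) (\<lambda>\<omega>. restrict (\<lambda>i. \<omega> i) J2)"
    using P.indep_var_restrict[OF indep_coords[unfolded perc_Mf] assms(3)] by simp
  define X1 where "X1 = {x \<in> space (PiM J1 (Mf p q)). f1 x}"
  define X2 where "X2 = {x \<in> space (PiM J2 (Mf p q)). f2 x}"
  have s: "X1 \<in> sets (PiM J1 (Mf p q))" "X2 \<in> sets (PiM J2 (Mf p q))"
    unfolding X1_def X2_def by (auto intro!: fin_sets assms)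
  have e: "{\<omega> \<in> space (perc p q). f1 \<omega> \<and> f2 \<omega>} =
     (\<lambda>x. (restrict (\<lambda>i. x i) J1, restrict (\<lambda>i. x i) J2)) -` (X1 \<times> X2) \<inter> space (perc p q)"
    using assms(4,5) by (auto simp: dep_def X1_def X2_def space_perc space_Mf perc_Mf[symmetric])
  have e1: "{\<omega> \<in> space (perc p q). f1 \<omega>} = (\<lambda>x. restrict (\<lambda>i. x i) J1) -` X1 \<inter> space (perc p q)"
    using assms(4) by (auto simp: dep_def X1_def space_perc space_Mf perc_Mf[symmetric])
  have e2: "{\<omega> \<in> space (perc p q). f2 \<omega>} = (\<lambda>x. restrict (\<lambda>i. x i) J2) -` X2 \<inter> space (perc p q)"
    using assms(5) by (auto simp: dep_def X2_def space_perc space_Mf perc_Mf[symmetric])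
  show ?thesis unfolding e e1 e2 unfolding perc_Mf
    by (rule P.indep_varD[OF iv s])
qed

lemma meas_coll:
  assumes "finite J"
  shows "measure (perc p q) {x \<in> space (perc p q). \<forall>i\<in>J. x i \<in> X i} = (\<Prod>i\<in>J. measure (Mf p q i) (X i))"
proof -
  interpret P: product_prob_space "Mf p q" UNIV by (rule PS)
  have "emeasure (perc p q) {x \<in> space (perc p q). \<forall>i\<in>J. x i \<in> X i} = (\<Prod>i\<in>J. emeasure (Mf p q i) (X i))"
    unfolding perc_Mf using assms by (intro P.emeasure_PiM_Collect) auto
  then show ?thesis
    unfolding perc_Mf P.emeasure_eq_measure P.M.emeasure_eq_measure
    by (simp add: prod_ennreal measure_nonneg prod_nonneg)
qed

lemma prob_closed:
  assumes "0 \<le> r" "r \<le> 1" "r = (if snd e = None then p else q)"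
  shows "measure (perc p q) {x \<in> space (perc p q). \<not> x e} = 1 - r"
proof -
  have "measure (perc p q) {x \<in> space (perc p q). \<forall>i\<in>{e}. x i \<in> {False}} = 1 - r"
    using assms by (subst meas_coll) (auto simp: Mf_def measure_pmf_single)
  then show ?thesis by simp
qed

definition own :: "nat \<Rightarrow> int \<times> int \<Rightarrow> 'n edge set" where
  "own l x = {e. \<exists>t<l. fst e = emb (fst x * int l + int t) (snd x)}"

definition ownB :: "nat \<Rightarrow> nat \<Rightarrow> int \<times> int \<Rightarrow> 'n edge set" where
  "ownB l k c = (\<Union>x\<in>blk k c. own l x)"

lemma finite_own: "finite (own l x :: ('n::finite) edge set)"
proof -
  have "own l x = (\<lambda>(t, d). (emb (fst x * int l + int t) (snd x), d)) ` ({..<l} \<times> UNIV)"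
    by (auto simp: own_def image_iff prod_eq_iff)
  moreover have "finite ({..<l} \<times> (UNIV :: 'n option set))" by simp
  ultimately show ?thesis by (metis finite_imageI)
qed

lemma finite_ownB: "finite (ownB l k c :: ('n::finite) edge set)"
  unfolding ownB_def using finite_blk finite_own by blast

lemma osite_dep:
  assumes "\<forall>e\<in>own l x. \<omega> e = \<omega>' e"
  shows "osite l \<omega> x = osite l \<omega>' x"
proof -
  have m: "(emb (fst x * int l + int t) (snd x), d) \<in> own l x" if "t < l" for t d
    using that by (auto simp: own_def)
  have "\<And>t d. t < l \<Longrightarrow> \<omega> (emb (fst x * int l + int t) (snd x), d) = \<omega>' (emb (fst x * int l + int t) (snd x), d)"
    using assms m by blast
  then show ?thesis unfolding osite_def by auto
qed

lemma ownB_mono: "P \<in> Grid \<Longrightarrow> ownB l k (mc k c P) \<subseteq> ownB l (Suc k) c"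
  unfolding ownB_def using mc_sub by blast

lemma bad_dep:
  assumes "\<forall>e\<in>ownB l k c. \<omega> e = \<omega>' e"
  shows "bad l k c \<omega> = bad l k c \<omega>'"
  using assms
proof (induction k arbitrary: c)
  case 0
  then have "\<forall>x\<in>blk 0 c. osite l \<omega> x = osite l \<omega>' x"
    by (intro ballI osite_dep) (auto simp: ownB_def)
  then show ?case by auto
next
  case (Suc k)
  have "\<forall>P\<in>Grid. bad l k (mc k c P) \<omega> = bad l k (mc k c P) \<omega>'"
    using Suc.IH Suc.prems ownB_mono by blast
  then show ?case unfolding bad.simps by blast
qed

lemma dep_bad: "dep (ownB l k c) (bad l k c)"
  unfolding dep_def
proof
  fix \<omega> :: "'a edge \<Rightarrow> bool"
  show "bad l k c \<omega> = bad l k c (restrict \<omega> (ownB l k c))" by (rule bad_dep) simp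
qed

lemma own_disj:
  assumes "x \<noteq> y" shows "own l x \<inter> own l y = {}"
proof (rule ccontr)
  assume "own l x \<inter> own l y \<noteq> {}"
  then obtain t t' where tt: "t < l" "t' < l"
    "fst x * int l + int t = fst y * int l + int t'" "snd x = snd y"
    by (auto simp: own_def)
  have "fst x = fst y"
  proof (rule ccontr)
    assume ne: "fst x \<noteq> fst y"
    show False
    proof (cases "fst x < fst y")
      case True
      then have "(fst x + 1) * int l \<le> fst y * int l" by (intro mult_right_mono) auto
      then have h: "fst x * int l + int l \<le> fst y * int l" by (simp add: distrib_right)
      have "int t < int l" "0 \<le> int t'" using tt by auto
      then show False using h tt(3) by linarith
    next
      case False
      then have "(fst y + 1) * int l \<le> fst x * int l" using ne by (intro mult_right_mono) auto
      then have h: "fst y * int l + int l \<le> fst x * int l" by (simp add: distrib_right)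
      have "int t' < int l" "0 \<le> int t" using tt by auto
      then show False using h tt(3) by linarith
    qed
  qed
  then show False using assms tt by (simp add: prod_eq_iff)
qed

lemma ownB_disj:
  assumes "far P Q"
  shows "ownB l k (mc k c P) \<inter> ownB l k (mc k c Q) = {}"
proof (rule equals0I)
  fix e assume "e \<in> ownB l k (mc k c P) \<inter> ownB l k (mc k c Q)"
  then obtain x y where xy: "x \<in> blk k (mc k c P)" "e \<in> own l x" "y \<in> blk k (mc k c Q)" "e \<in> own l y"
    unfolding ownB_def by blast
  then have "x \<noteq> y" using far_disj[OF assms, of k c] by blast
  then show False using own_disj[of x y l] xy by blast
qed

lemma bad_sets: "{\<omega> \<in> space (perc p q). bad l k c \<omega>} \<in> sets (perc p q :: ('n::finite edge \<Rightarrow> bool) measure)"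
  by (rule ev_sets[OF finite_ownB dep_bad])

lemma prob_perc: "prob_space (perc p q)"
  unfolding perc_Mf by (rule prob_space_PiM) (simp add: Mf_def prob_space_measure_pmf)

lemma osite_sets: "{\<omega> \<in> space (perc p q). \<not> osite l \<omega> x} \<in> sets (perc p q :: ('n::finite edge \<Rightarrow> bool) measure)"
proof (rule ev_sets[OF finite_own[of l x]])
  show "dep (own l x) (\<lambda>\<omega>. \<not> osite l \<omega> x)"
    unfolding dep_def using osite_dep by (metis restrict_apply')
qed

lemma osite_bound:
  assumes p: "0 \<le> p" "p \<le> 1" and q: "0 \<le> q" "q \<le> 1"
  shows "measure (perc p q :: ('n::finite edge \<Rightarrow> bool) measure) {\<omega> \<in> space (perc p q). \<not> osite l \<omega> x}
     \<le> real l * (1 - p) + (1 - q) ^ l"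
proof -
  interpret PP: prob_space "perc p q :: ('n::finite edge \<Rightarrow> bool) measure" by (rule prob_perc)
  define ze :: "nat \<Rightarrow> 'n edge" where "ze t = (emb (fst x * int l + int t) (snd x), None)" for t
  define U :: "'n edge set" where "U = (\<lambda>t. (emb (fst x * int l + int t) (snd x), Some undefined)) ` {..<l}"
  define A where "A t = {\<omega> \<in> space (perc p q). \<not> \<omega> (ze t)}" for t
  define B where "B = {\<omega> \<in> space (perc p q). \<forall>e\<in>U. \<omega> e \<in> {False}}"
  define E where "E = {\<omega> \<in> space (perc p q :: ('n edge \<Rightarrow> bool) measure). \<not> osite l \<omega> x}"
  have sub: "E \<subseteq> (\<Union>t\<in>{..<l}. A t) \<union> B"
    by (auto simp: E_def osite_def A_def B_def U_def ze_def space_perc)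
  have finU: "finite U" by (simp add: U_def)
  have As: "A t \<in> sets (perc p q)" for t
    unfolding A_def by (rule ev_sets[of "{ze t}"]) (auto simp: dep_def)
  have Bs: "B \<in> sets (perc p q)"
    unfolding B_def by (rule ev_sets[OF finU]) (auto simp: dep_def)
  have cardU: "card U = l"
    unfolding U_def by (subst card_image) (auto simp: inj_on_def)
  have "measure (perc p q) E \<le> measure (perc p q) ((\<Union>t\<in>{..<l}. A t) \<union> B)"
    using As Bs by (intro PP.finite_measure_mono[OF sub] sets.Un sets.finite_UN) auto
  also have "\<dots> \<le> measure (perc p q) (\<Union>t\<in>{..<l}. A t) + measure (perc p q) B"
    using As Bs by (intro measure_subadditive sets.finite_UN) (auto simp: PP.emeasure_eq_measure)
  also have "measure (perc p q) (\<Union>t\<in>{..<l}. A t) \<le> (\<Sum>t<l. measure (perc p q) (A t))"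
    using As by (intro PP.finite_measure_subadditive_finite) auto
  also have "(\<Sum>t<l. measure (perc p q) (A t)) = real l * (1 - p)"
    unfolding A_def using prob_closed[of p "ze _" p q] p by (simp add: ze_def)
  also have "measure (perc p q) B = (\<Prod>e\<in>U. measure (Mf p q e) {False})"
    unfolding B_def by (rule meas_coll[OF finU])
  also have "\<dots> = (\<Prod>e\<in>U. 1 - q)"
    using q by (intro prod.cong) (auto simp: U_def Mf_def measure_pmf_single)
  also have "\<dots> = (1 - q) ^ l" using cardU by simp
  finally show ?thesis by (simp add: E_def)
qed

definition bb :: "nat \<Rightarrow> real" where "bb k = 1 / (57122 * 2 ^ k)"

lemma bb_pos: "0 < bb k" by (simp add: bb_def)

lemma bb_step: "28561 * (bb k * bb k) \<le> bb (Suc k)"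
proof -
  define X :: real where "X = 2 ^ k"
  have X: "1 \<le> X" by (simp add: X_def)
  have "28561 * (bb k * bb k) = 1 / (114244 * (X * X))"
    by (simp add: bb_def X_def field_simps)
  also have "\<dots> \<le> 1 / (114244 * X)"
    using X by (intro divide_left_mono mult_left_mono) (auto simp: mult_pos_pos)
  also have "\<dots> = bb (Suc k)" by (simp add: bb_def X_def)
  finally show ?thesis .
qed

lemma card_blk0: "card (blk 0 c) \<le> 256"
proof -
  have "blk 0 c \<subseteq> {fst c..<fst c + 16} \<times> {snd c..<snd c + 16}"
    by (auto simp: blk_def u_def)
  then have "card (blk 0 c) \<le> card ({fst c..<fst c + 16} \<times> {snd c..<snd c + 16})"
    by (intro card_mono) auto
  then show ?thesis by (simp add: card_cartesian_product)
qed

lemma card_Grid: "card Grid = 169"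
  by (simp add: Grid_def card_cartesian_product)

lemma bad_bound:
  assumes p: "0 \<le> p" "p \<le> 1" and q: "0 \<le> q" "q \<le> 1"
    and eta: "real l * (1 - p) + (1 - q) ^ l \<le> 1 / 2 ^ 24"
  shows "measure (perc p q :: ('n::finite edge \<Rightarrow> bool) measure) {\<omega> \<in> space (perc p q). bad l k c \<omega>} \<le> bb k"
proof (induction k arbitrary: c)
  case 0
  interpret PP: prob_space "perc p q :: ('n::finite edge \<Rightarrow> bool) measure" by (rule prob_perc)
  define E where "E = {\<omega> \<in> space (perc p q :: ('n edge \<Rightarrow> bool) measure). bad l 0 c \<omega>}"
  define A where "A x = {\<omega> \<in> space (perc p q :: ('n edge \<Rightarrow> bool) measure). \<not> osite l \<omega> x}" for x
  have "E = (\<Union>x\<in>blk 0 c. A x)" by (auto simp: E_def A_def)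
  then have "measure (perc p q) E \<le> (\<Sum>x\<in>blk 0 c. measure (perc p q) (A x))"
    using finite_blk[of 0 c] by (simp add: PP.finite_measure_subadditive_finite A_def osite_sets image_subset_iff)
  also have "\<dots> \<le> (\<Sum>x\<in>blk 0 c. 1 / 2 ^ 24)"
    unfolding A_def by (intro sum_mono order_trans[OF osite_bound[OF p q] eta])
  also have "\<dots> = card (blk 0 c) * (1 / 2 ^ 24)" by simp
  also have "\<dots> \<le> 256 * (1 / 2 ^ 24)"
    using card_blk0[of c] by (intro mult_right_mono) auto
  also have "\<dots> \<le> bb 0" by (simp add: bb_def)
  finally show ?case by (simp add: E_def)
next
  case (Suc k)
  interpret PP: prob_space "perc p q :: ('n::finite edge \<Rightarrow> bool) measure" by (rule prob_perc)
  define FP where "FP = {PQ \<in> Grid \<times> Grid. far (fst PQ) (snd PQ)}"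
  define E where "E = {\<omega> \<in> space (perc p q :: ('n edge \<Rightarrow> bool) measure). bad l (Suc k) c \<omega>}"
  define A where "A P = {\<omega> \<in> space (perc p q :: ('n edge \<Rightarrow> bool) measure). bad l k (mc k c P) \<omega>}" for P
  define D where "D PQ = {\<omega> \<in> space (perc p q :: ('n edge \<Rightarrow> bool) measure).
      bad l k (mc k c (fst PQ)) \<omega> \<and> bad l k (mc k c (snd PQ)) \<omega>}" for PQ
  have finFP: "finite FP" unfolding FP_def Grid_def by (rule finite_subset[of _ "({0..12} \<times> {0..12}) \<times> ({0..12} \<times> {0..12})"]) auto
  have cardFP: "card FP \<le> 28561"
  proof -
    have "card FP \<le> card (Grid \<times> Grid)" unfolding FP_def
      by (intro card_mono) (auto simp: Grid_def)
    then show ?thesis by (simp add: card_cartesian_product card_Grid)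
  qed
  have As: "A P \<in> sets (perc p q)" for P unfolding A_def by (rule bad_sets)
  have Ds: "D PQ \<in> sets (perc p q)" for PQ
  proof -
    have "D PQ = A (fst PQ) \<inter> A (snd PQ)" by (auto simp: D_def A_def)
    then show ?thesis using As by simp
  qed
  have "E = (\<Union>PQ\<in>FP. D PQ)"
    unfolding E_def D_def FP_def bad.simps by force
  then have "measure (perc p q) E \<le> (\<Sum>PQ\<in>FP. measure (perc p q) (D PQ))"
    using finFP Ds by (simp add: PP.finite_measure_subadditive_finite image_subset_iff)
  also have "\<dots> \<le> (\<Sum>PQ\<in>FP. bb k * bb k)"
  proof (intro sum_mono)
    fix PQ assume PQ: "PQ \<in> FP"
    have "measure (perc p q) (D PQ) = measure (perc p q) (A (fst PQ)) * measure (perc p q) (A (snd PQ))"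
      unfolding D_def A_def
      by (rule indep_prod[OF finite_ownB finite_ownB ownB_disj dep_bad dep_bad]) (use PQ in \<open>simp add: FP_def\<close>)
    also have "\<dots> \<le> bb k * bb k"
      using Suc.IH bb_pos[of k] unfolding A_def by (intro mult_mono) auto
    finally show "measure (perc p q) (D PQ) \<le> bb k * bb k" .
  qed
  also have "\<dots> = card FP * (bb k * bb k)" by simp
  also have "\<dots> \<le> 28561 * (bb k * bb k)"
    using cardFP by (intro mult_right_mono) auto
  also have "\<dots> \<le> bb (Suc k)" by (rule bb_step)
  finally show ?case by (simp add: E_def)
qed

lemma bb_shift: "bb (i + K) = bb K * (1/2) ^ i"
  by (simp add: bb_def power_add field_simps)

lemma notG_bound:
  assumes p: "0 \<le> p" "p \<le> 1" and q: "0 \<le> q" "q \<le> 1"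
    and eta: "real l * (1 - p) + (1 - q) ^ l \<le> 1 / 2 ^ 24"
  shows "measure (perc p q :: ('n::finite edge \<Rightarrow> bool) measure)
     {\<omega> \<in> space (perc p q). \<exists>k\<ge>K. bad l k (C k) \<omega>} \<le> 2 * bb K"
proof -
  interpret PP: prob_space "perc p q :: ('n::finite edge \<Rightarrow> bool) measure" by (rule prob_perc)
  define A where "A i = {\<omega> \<in> space (perc p q :: ('n edge \<Rightarrow> bool) measure). bad l (i + K) (C (i + K)) \<omega>}" for i
  have eq: "{\<omega> \<in> space (perc p q :: ('n edge \<Rightarrow> bool) measure). \<exists>k\<ge>K. bad l k (C k) \<omega>} = (\<Union>i. A i)"
  proof (intro equalityI subsetI)
    fix \<omega> assume "\<omega> \<in> {\<omega> \<in> space (perc p q :: ('n edge \<Rightarrow> bool) measure). \<exists>k\<ge>K. bad l k (C k) \<omega>}"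
    then obtain k where "\<omega> \<in> space (perc p q)" "K \<le> k" "bad l k (C k) \<omega>" by auto
    then show "\<omega> \<in> (\<Union>i. A i)" unfolding A_def by (intro UN_I[of "k - K"]) auto
  next
    fix \<omega> assume "\<omega> \<in> (\<Union>i. A i)"
    then obtain i where "\<omega> \<in> A i" by auto
    then show "\<omega> \<in> {\<omega> \<in> space (perc p q :: ('n edge \<Rightarrow> bool) measure). \<exists>k\<ge>K. bad l k (C k) \<omega>}"
      unfolding A_def by (auto intro!: exI[of _ "i + K"])
  qed
  have As: "range A \<subseteq> sets (perc p q)" unfolding A_def using bad_sets by blast
  have mA: "measure (perc p q) (A i) \<le> bb K * (1/2) ^ i" for i
    unfolding A_def bb_shift[symmetric] by (rule bad_bound[OF p q eta])
  have sg: "summable (\<lambda>i. bb K * (1/2::real) ^ i)"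
    by (intro summable_mult summable_geometric) simp
  have sA: "summable (\<lambda>i. measure (perc p q) (A i))"
    by (rule summable_comparison_test[OF _ sg]) (use mA in auto)
  have "measure (perc p q) (\<Union>i. A i) \<le> (\<Sum>i. measure (perc p q) (A i))"
    by (rule PP.finite_measure_subadditive_countably[OF As sA])
  also have "\<dots> \<le> (\<Sum>i. bb K * (1/2) ^ i)"
    by (rule suminf_le[OF mA sA sg])
  also have "\<dots> = bb K * (\<Sum>i. (1/2::real) ^ i)"
    by (rule suminf_mult) (rule summable_geometric, simp)
  also have "(\<Sum>i. (1/2::real) ^ i) = 2"
    using suminf_geometric[of "1/2::real"] by simp
  finally show ?thesis unfolding eq by simp
qed

lemma pred_coord[measurable]:
  fixes e :: "'n edge"
  shows "Measurable.pred (perc p q :: ('n edge \<Rightarrow> bool) measure) (\<lambda>\<omega>. \<omega> e)"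
proof -
  have eq: "measurable (PiM UNIV (Mf p q)) (Mf p q e) = measurable (PiM UNIV (Mf p q)) (count_space (UNIV :: bool set))"
    by (rule measurable_cong_sets) simp_all
  have "(\<lambda>\<omega>. \<omega> e) \<in> measurable (PiM UNIV (Mf p q)) (Mf p q e)"
    by (rule measurable_component_singleton) simp
  then show ?thesis unfolding perc_Mf eq .
qed

lemma pred_const: "Measurable.pred M (\<lambda>\<omega>. K)"
  by (rule measurable_const) simp

lemma pred_adj: "Measurable.pred (perc p q :: ('n::finite edge \<Rightarrow> bool) measure) (\<lambda>\<omega>. open_adj \<omega> x y)"
  unfolding open_adj_def
  by (intro pred_intros_logic(5) pred_intros_countable(2) pred_intros_conj1' pred_coord)

lemma pred_pow: "Measurable.pred (perc p q :: ('n::finite edge \<Rightarrow> bool) measure) (\<lambda>\<omega>. (open_adj \<omega> ^^ m) x y)"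
proof (induction m arbitrary: y)
  case 0
  then show ?case using pred_const by simp
next
  case (Suc m)
  have "Measurable.pred (perc p q :: ('n::finite edge \<Rightarrow> bool) measure) (\<lambda>\<omega>. \<exists>z. (open_adj \<omega> ^^ m) x z \<and> open_adj \<omega> z y)"
    by (intro pred_intros_countable(2) pred_intros_logic(3) Suc.IH pred_adj)
  then show ?case by (simp add: relcompp_apply)
qed

lemma inf_iff: "infinite (cluster \<omega> v) \<longleftrightarrow> (\<forall>xs. \<exists>y. y \<notin> set xs \<and> (\<exists>m. (open_adj \<omega> ^^ m) v y))"
proof
  assume inf: "infinite (cluster \<omega> v)"
  show "\<forall>xs. \<exists>y. y \<notin> set xs \<and> (\<exists>m. (open_adj \<omega> ^^ m) v y)"
  proof
    fix xs :: "'a vertex list"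
    have "cluster \<omega> v - set xs \<noteq> {}" using inf
      by (metis Diff_eq_empty_iff finite_set finite_subset)
    then obtain y where y: "y \<in> cluster \<omega> v" "y \<notin> set xs" by blast
    then have "\<exists>m. (open_adj \<omega> ^^ m) v y" by (simp add: cluster_def rtranclp_power)
    with y(2) show "\<exists>y. y \<notin> set xs \<and> (\<exists>m. (open_adj \<omega> ^^ m) v y)" by blast
  qed
next
  assume H: "\<forall>xs. \<exists>y. y \<notin> set xs \<and> (\<exists>m. (open_adj \<omega> ^^ m) v y)"
  show "infinite (cluster \<omega> v)"
  proof
    assume "finite (cluster \<omega> v)"
    then obtain xs where xs: "set xs = cluster \<omega> v" using finite_list by blast
    obtain y m where "y \<notin> set xs" "(open_adj \<omega> ^^ m) v y" using H by blast
    then show False using xs by (auto simp: cluster_def rtranclp_power)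
  qed
qed

lemma inf_sets: "{\<omega> \<in> space (perc p q). infinite (cluster \<omega> v)} \<in> sets (perc p q :: ('n::finite edge \<Rightarrow> bool) measure)"
proof -
  have "Measurable.pred (perc p q :: ('n::finite edge \<Rightarrow> bool) measure) (\<lambda>\<omega>. \<forall>xs. \<exists>y. y \<notin> set xs \<and> (\<exists>m. (open_adj \<omega> ^^ m) v y))"
    by (intro pred_intros_countable pred_intros_conj1' pred_pow)
  then show ?thesis unfolding inf_iff by (simp add: pred_def)
qed

lemma pred_bad: "Measurable.pred (perc p q :: ('n::finite edge \<Rightarrow> bool) measure) (\<lambda>\<omega>. bad l k c \<omega>)"
  unfolding pred_def by (rule bad_sets)

lemma NG_sets: "{\<omega> \<in> space (perc p q). \<exists>k\<ge>K. bad l k (C k) \<omega>} \<in> sets (perc p q :: ('n::finite edge \<Rightarrow> bool) measure)"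
proof -
  have "Measurable.pred (perc p q :: ('n::finite edge \<Rightarrow> bool) measure) (\<lambda>\<omega>. \<exists>k. K \<le> k \<and> bad l k (C k) \<omega>)"
    by (rule pred_intros_countable(2), rule pred_intros_conj1', rule pred_bad)
  then show ?thesis unfolding pred_def .
qed

lemma rep_origin: "rep l (0, 0) = origin"
  by (simp add: rep_def emb_def origin_def fun_eq_iff)

lemma bb_small: "2 * bb K \<le> (1/2) ^ K"
  by (simp add: bb_def field_simps)

lemma AE_main:
  assumes p: "0 \<le> p" "p \<le> 1" and q: "0 \<le> q" "q \<le> 1"
    and eta: "real l * (1 - p) + (1 - q) ^ l \<le> 1 / 2 ^ 24" and l: "0 < l"
  shows "AE \<omega> in (perc p q :: ('n::finite edge \<Rightarrow> bool) measure). \<exists>x. infinite (cluster \<omega> x)"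
proof -
  interpret PP: prob_space "perc p q :: ('n::finite edge \<Rightarrow> bool) measure" by (rule prob_perc)
  define N where "N = {\<omega> \<in> space (perc p q :: ('n edge \<Rightarrow> bool) measure). \<forall>K. \<exists>k\<ge>K. bad l k (C k) \<omega>}"
  have Ns: "N \<in> sets (perc p q)"
  proof -
    have "Measurable.pred (perc p q :: ('n::finite edge \<Rightarrow> bool) measure) (\<lambda>\<omega>. \<forall>K. \<exists>k. K \<le> k \<and> bad l k (C k) \<omega>)"
      by (rule pred_intros_countable(1), rule pred_intros_countable(2), rule pred_intros_conj1', rule pred_bad)
    then show ?thesis unfolding pred_def N_def .
  qed
  have mN: "measure (perc p q) N \<le> (1/2) ^ K" for K
  proof -
    have "measure (perc p q) N \<le> measure (perc p q) {\<omega> \<in> space (perc p q :: ('n edge \<Rightarrow> bool) measure). \<exists>k\<ge>K. bad l k (C k) \<omega>}"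
      by (rule PP.finite_measure_mono[OF _ NG_sets]) (auto simp: N_def)
    also have "\<dots> \<le> 2 * bb K" by (rule notG_bound[OF p q eta])
    also have "\<dots> \<le> (1/2) ^ K" by (rule bb_small)
    finally show ?thesis .
  qed
  have "measure (perc p q) N = 0"
  proof (rule ccontr)
    assume "measure (perc p q) N \<noteq> 0"
    then have "0 < measure (perc p q) N" using measure_nonneg[of "perc p q" N] by linarith
    then obtain K where "(1/2::real) ^ K < measure (perc p q) N"
      using real_arch_pow_inv[of "measure (perc p q) N" "1/2"] by auto
    then show False using mN[of K] by linarith
  qed
  then have "N \<in> null_sets (perc p q)"
    using Ns by (intro null_setsI) (simp add: PP.emeasure_eq_measure)
  moreover have "{\<omega> \<in> space (perc p q). \<not> (\<exists>x. infinite (cluster \<omega> x))} \<subseteq> N"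
  proof
    fix \<omega> assume \<omega>: "\<omega> \<in> {\<omega> \<in> space (perc p q :: ('n edge \<Rightarrow> bool) measure). \<not> (\<exists>x. infinite (cluster \<omega> x))}"
    show "\<omega> \<in> N"
    proof (rule ccontr)
      assume "\<omega> \<notin> N"
      then obtain K where K: "\<forall>k\<ge>K. \<not> bad l k (C k) \<omega>" using \<omega> by (auto simp: N_def)
      then obtain x where "x \<in> core l K (C K) \<omega>" using core_ne by blast
      then have "infinite (cluster \<omega> (rep l x))" using det_inf[OF K _ l] by blast
      then show False using \<omega> by blast
    qed
  qed
  ultimately show ?thesis by (rule AE_I')
qed

lemma theta_main:
  assumes p: "0 \<le> p" "p \<le> 1" and q: "0 \<le> q" "q \<le> 1"
    and eta: "real l * (1 - p) + (1 - q) ^ l \<le> 1 / 2 ^ 24" and l: "0 < l"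
  shows "theta TYPE('n::finite) p q > 0"
proof -
  interpret PP: prob_space "perc p q :: ('n::finite edge \<Rightarrow> bool) measure" by (rule prob_perc)
  define T where "T = {\<omega> \<in> space (perc p q :: ('n edge \<Rightarrow> bool) measure). infinite (cluster \<omega> origin)}"
  define NG where "NG = {\<omega> \<in> space (perc p q :: ('n edge \<Rightarrow> bool) measure). \<exists>k\<ge>0. bad l k (C k) \<omega>}"
  have NGs: "NG \<in> sets (perc p q)" unfolding NG_def by (rule NG_sets)
  have Ts: "T \<in> sets (perc p q)" unfolding T_def by (rule inf_sets)
  have sub: "space (perc p q) - NG \<subseteq> T"
  proof
    fix \<omega> assume \<omega>: "\<omega> \<in> space (perc p q :: ('n edge \<Rightarrow> bool) measure) - NG"
    then have K: "\<forall>k\<ge>0. \<not> bad l k (C k) \<omega>" by (auto simp: NG_def)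
    have "(0, 0) \<in> core l 0 (C 0) \<omega>" using c_in_blk[of "(0,0)" 0] by (simp add: C_def)
    then have "infinite (cluster \<omega> (rep l (0, 0)))" using det_inf[OF K _ l] by blast
    then show "\<omega> \<in> T" using \<omega> by (simp add: T_def rep_origin)
  qed
  have "0 < 1 - 2 * bb 0" by (simp add: bb_def)
  also have "1 - 2 * bb 0 \<le> 1 - measure (perc p q) NG"
    using notG_bound[OF p q eta, of 0] unfolding NG_def by simp
  also have "\<dots> = measure (perc p q) (space (perc p q) - NG)"
    using PP.prob_compl[OF NGs] by simp
  also have "\<dots> \<le> measure (perc p q) T"
    by (rule PP.finite_measure_mono[OF sub Ts])
  finally show ?thesis unfolding theta_def T_def .
qed

lemma params:
  fixes p q :: real
  assumes p: "1 - 1/2^26 < p" "p < 1" and q: "q \<le> 1" and qa: "2^52 * (1 - p) / (1 + p) < q"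
  shows "\<exists>l::nat. 0 < l \<and> real l * (1 - p) + (1 - q) ^ l \<le> 1/2^24"
proof -
  define e where "e = 1 - p"
  have e: "0 < e" "e < 1/2^26" using p by (auto simp: e_def)
  define y where "y = (1/2^25) / e"
  have ey: "y * e = 1/2^25" using e by (simp add: y_def)
  have y2: "2 < y" using e unfolding y_def by (simp add: field_simps)
  define l where "l = nat \<lfloor>y\<rfloor>"
  have fl: "of_int \<lfloor>y\<rfloor> \<le> y" "y < of_int \<lfloor>y\<rfloor> + 1" by linarith+
  have fl0: "0 \<le> \<lfloor>y\<rfloor>" using y2 by linarith
  have rl: "real l = of_int \<lfloor>y\<rfloor>" using fl0 by (simp add: l_def)
  have l1: "y / 2 \<le> real l" using rl fl y2 by linarith
  have lpos: "0 < l" using rl fl y2 by linarith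
  have t1: "real l * (1 - p) \<le> 1/2^25"
  proof -
    have "real l * e \<le> y * e" using rl fl e by (intro mult_right_mono) auto
    then show ?thesis using ey by (simp add: e_def)
  qed
  have b: "2^52 * e / 2 \<le> 2^52 * e / (1 + p)"
    using e p by (intro divide_left_mono) auto
  have a: "2^51 * e = 2^52 * e / (2::real)" by simp
  have c: "2^52 * e / (1 + p) < q" using qa by (simp only: e_def)
  have qe: "2^51 * e \<le> q" using a b c by linarith
  have ql: "2^25 \<le> q * real l"
  proof -
    have "(2^51 * e) * (y / 2) \<le> q * real l"
      using qe l1 e y2 by (intro mult_mono) auto
    moreover have "(2^51 * e) * (y / 2) = 2^50 * (y * e)" by (simp add: field_simps)
    ultimately show ?thesis using ey by simp
  qed
  have q0: "0 \<le> q" using qe e by (smt (verit) zero_le_power mult_nonneg_nonneg)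
  have "(1 - q) ^ l \<le> exp (- q) ^ l"
    using q exp_ge_add_one_self[of "-q"] by (intro power_mono) auto
  also have "\<dots> = exp (- (q * real l))"
    using exp_of_nat_mult[of l "-q"] by (simp add: mult.commute)
  also have "\<dots> = 1 / exp (q * real l)" by (simp add: exp_minus field_simps)
  also have "\<dots> \<le> 1 / (1 + q * real l)"
    using q0 by (intro divide_left_mono) (auto simp: add_pos_nonneg)
  also have "\<dots> \<le> 1 / 2^25"
    using ql by (intro divide_left_mono) auto
  finally have t2: "(1 - q) ^ l \<le> 1 / 2^25" .
  show ?thesis using t1 t2 lpos by (intro exI[of _ l]) auto
qed

theorem theorem2:
  assumes "CARD('n::finite) \<ge> 2"
  shows "\<exists>\<alpha>::real. \<exists>p0::real. \<alpha> > 0 \<and> p0 < 1 \<and>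
           (\<forall>p q. p0 < p \<and> p < 1 \<and> q \<le> 1 \<and> q > \<alpha> * (1 - p) / (1 + p) \<longrightarrow>
              (AE \<omega> in (perc p q :: ('n edge \<Rightarrow> bool) measure).
                   \<exists>x. infinite (cluster \<omega> x))
              \<and> theta TYPE('n) p q > 0)"
proof -
  have main: "(AE \<omega> in (perc p q :: ('n edge \<Rightarrow> bool) measure). \<exists>x. infinite (cluster \<omega> x))
              \<and> theta TYPE('n) p q > 0"
    if H: "1 - 1/2^26 < p" "p < 1" "q \<le> 1" "q > 2^52 * (1 - p) / (1 + p)" for p q :: real
  proof -
    obtain l where l: "0 < l" "real l * (1 - p) + (1 - q) ^ l \<le> 1/2^24"
      using params[OF H(1,2,3,4)] by blast
    have p: "0 \<le> p" "p \<le> 1" using H by auto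
    have "0 < 2^52 * (1 - p) / (1 + p)" using H by (intro divide_pos_pos) auto
    then have "0 < q" using H(4) by linarith
    then have q: "0 \<le> q" "q \<le> 1" using H(3) by auto
    show ?thesis using AE_main[OF p q l(2) l(1)] theta_main[OF p q l(2) l(1)] by blast
  qed
  have all: "\<forall>p q. 1 - 1/2^26 < p \<and> p < 1 \<and> q \<le> 1 \<and> q > 2^52 * (1 - p) / (1 + p) \<longrightarrow>
              (AE \<omega> in (perc p q :: ('n edge \<Rightarrow> bool) measure). \<exists>x. infinite (cluster \<omega> x))
              \<and> theta TYPE('n) p q > 0"
    using main by blast
  show ?thesis
    apply (rule exI[of _ "2^52"])
    apply (rule exI[of _ "1 - 1/2^26"])
    apply (rule conjI, simp)
    apply (rule conjI, simp)
    by (rule all)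
qed

end
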